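(* Let $m\ge1$ hypotheses be tested, of which $m_0\ge1$ are true nulls, with mutually independent p-values $p_1,\dots,p_m\in[0,1)$, the null p-values being i.i.d. $U[0,1]$. Define the estimator $$\tilde m_0\equiv 2-\sum_{i=1}^m\log(1-p_i).$$ Then the modified step-up BH procedure with estimator $\tilde m_0$ and parameter $q\in(0,1]$ controls the FDR at level $\le q$, i.e. $E[V/R^+]\le q$.
   Context: The modified step-up BH procedure with estimator $\tilde m_0$ and level $q$: set $\gamma_i=iq/\tilde m_0$, sort the p-values $p_{(1)}\le\dots\le p_{(m)}$, let $R=\max\{i:p_{(i)}\le\gamma_i\}$ and reject the hypotheses with p-values $p_{(1)},\dots,p_{(R)}$ ($R=0$ if no such $i$). $V$ is the number of rejected true null hypotheses, $R^+=\max(R,1)$, and $FDR=E[V/R^+]$ (with $V/R^+=0$ when $R=0$). *)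

theory Defs
  imports "HOL-Probability.Probability"
begin

text \<open>Hypotheses are indexed by 1..m; a realisation of the p-values is a function
  p :: nat => real (only the values on 1..m matter).\<close>

definition pord :: "(nat \<Rightarrow> real) \<Rightarrow> nat \<Rightarrow> nat \<Rightarrow> real" where
  "pord p m k = sort (map p [1..<m+1]) ! (k - 1)"

definition m0_tilde :: "(nat \<Rightarrow> real) \<Rightarrow> nat \<Rightarrow> real" where
  "m0_tilde p m = 2 - (\<Sum>i=1..m. ln (1 - p i))"

definition bh_R :: "(nat \<Rightarrow> real) \<Rightarrow> nat \<Rightarrow> real \<Rightarrow> nat" where
  "bh_R p m q = Max ({0} \<union> {i \<in> {1..m}. pord p m i \<le> real i * q / m0_tilde p m})"

definition bh_rejected :: "(nat \<Rightarrow> real) \<Rightarrow> nat \<Rightarrow> real \<Rightarrow> nat set" where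
  "bh_rejected p m q = {i \<in> {1..m}. 0 < bh_R p m q \<and> p i \<le> pord p m (bh_R p m q)}"

text \<open>False discovery proportion V / R^+, with N the set of true nulls.\<close>
definition fdp :: "(nat \<Rightarrow> real) \<Rightarrow> nat \<Rightarrow> nat set \<Rightarrow> real \<Rightarrow> real" where
  "fdp p m N q = real (card (bh_rejected p m q \<inter> N)) / real (max (bh_R p m q) 1)"

end

theory Submission
  imports Defs "HOL-Real_Asymp.Real_Asymp"
begin

definition cnt :: "(nat \<Rightarrow> real) \<Rightarrow> nat \<Rightarrow> real \<Rightarrow> nat" where
  "cnt x m t = card {l\<in>{1..m}. x l \<le> t}"

lemma sorted_nth_le_iff:
  fixes ys :: "real list"
  assumes "sorted ys" "j < length ys"
  shows "ys ! j \<le> t \<longleftrightarrow> Suc j \<le> length (filter (\<lambda>v. v \<le> t) ys)"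
proof
  assume h: "ys ! j \<le> t"
  have "{0..<Suc j} \<subseteq> {i. i < length ys \<and> ys ! i \<le> t}"
  proof
    fix i assume "i \<in> {0..<Suc j}"
    then have "i \<le> j" by auto
    then have "ys ! i \<le> ys ! j" using assms by (simp add: sorted_nth_mono)
    then show "i \<in> {i. i < length ys \<and> ys ! i \<le> t}" using h \<open>i\<le>j\<close> assms by auto
  qed
  then have "card {0..<Suc j} \<le> card {i. i < length ys \<and> ys ! i \<le> t}"
    by (intro card_mono) auto
  then show "Suc j \<le> length (filter (\<lambda>v. v \<le> t) ys)"
    by (simp add: length_filter_conv_card)
next
  assume h: "Suc j \<le> length (filter (\<lambda>v. v \<le> t) ys)"
  show "ys ! j \<le> t"
  proof (rule ccontr)
    assume "\<not> ys ! j \<le> t"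
    have "{i. i < length ys \<and> ys ! i \<le> t} \<subseteq> {0..<j}"
    proof
      fix i assume i: "i \<in> {i. i < length ys \<and> ys ! i \<le> t}"
      show "i \<in> {0..<j}"
      proof (rule ccontr)
        assume "i \<notin> {0..<j}"
        then have "j \<le> i" by auto
        then have "ys ! j \<le> ys ! i" using assms i by (simp add: sorted_nth_mono)
        then show False using i \<open>\<not> ys ! j \<le> t\<close> by auto
      qed
    qed
    then have "card {i. i < length ys \<and> ys ! i \<le> t} \<le> j"
      using card_mono[of "{0..<j}"] by fastforce
    then show False using h by (simp add: length_filter_conv_card)
  qed
qed

lemma length_filter_map_upt:
  "length (filter P (map x [1..<m+1])) = card {l\<in>{1..m}. P (x l)}"
proof -
  have "length (filter P (map x [1..<m+1])) = length (filter (P \<circ> x) [1..<m+1])"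
    by (simp only: filter_map length_map)
  also have "\<dots> = card (set (filter (P \<circ> x) [1..<m+1]))"
    by (rule distinct_card[symmetric]) simp
  also have "set (filter (P \<circ> x) [1..<m+1]) = {l\<in>{1..m}. P (x l)}" by auto
  finally show ?thesis .
qed

lemma pord_le_iff:
  assumes "1 \<le> k" "k \<le> m"
  shows "pord x m k \<le> t \<longleftrightarrow> k \<le> cnt x m t"
proof -
  let ?ys = "sort (map x [1..<m+1])"
  have len: "length ?ys = m" by simp
  have "pord x m k \<le> t \<longleftrightarrow> Suc (k-1) \<le> length (filter (\<lambda>v. v \<le> t) ?ys)"
    unfolding pord_def using assms by (intro sorted_nth_le_iff) auto
  also have "length (filter (\<lambda>v. v \<le> t) ?ys) = length (filter (\<lambda>v. v \<le> t) (map x [1..<m+1]))"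
    by (simp add: filter_sort)
  also have "\<dots> = cnt x m t" unfolding cnt_def length_filter_map_upt ..
  finally show ?thesis using assms by simp
qed

lemma bh_R_alt:
  "bh_R x m q = Max ({0} \<union> {k\<in>{1..m}. k \<le> cnt x m (real k * q / m0_tilde x m)})"
  unfolding bh_R_def by (intro arg_cong[where f=Max]) (auto simp: pord_le_iff)

definition indom :: "nat \<Rightarrow> (nat \<Rightarrow> real) \<Rightarrow> bool" where
  "indom m x \<longleftrightarrow> (\<forall>l\<in>{1..m}. 0 \<le> x l \<and> x l < 1)"

definition Ti :: "(nat \<Rightarrow> real) \<Rightarrow> nat \<Rightarrow> nat \<Rightarrow> real" where
  "Ti x m i = 2 - (\<Sum>l\<in>{1..m}-{i}. ln (1 - x l))"

definition G :: "nat \<Rightarrow> real \<Rightarrow> nat \<Rightarrow> (nat \<Rightarrow> real) \<Rightarrow> real" where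
  "G m q i x = (if indom m x \<and> x i \<le> real (bh_R x m q) * q / Ti x m i
     then 1 / real (max (bh_R x m q) 1) else 0)"

lemma ln_term_le0: "0 \<le> (u::real) \<Longrightarrow> u < 1 \<Longrightarrow> ln (1 - u) \<le> 0"
  by simp

lemma m0_ge2: "indom m x \<Longrightarrow> 2 \<le> m0_tilde x m"
  unfolding m0_tilde_def indom_def
  using sum_nonpos[of "{1..m}" "\<lambda>l. ln (1 - x l)"] by auto

lemma Ti_ge2: "indom m x \<Longrightarrow> 2 \<le> Ti x m i"
  unfolding Ti_def indom_def
  using sum_nonpos[of "{1..m}-{i}" "\<lambda>l. ln (1 - x l)"] by auto

lemma Ti_le_m0: assumes "indom m x" "i \<in> {1..m}" shows "Ti x m i \<le> m0_tilde x m"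
proof -
  have "(\<Sum>l\<in>{1..m}. ln (1 - x l)) = ln (1 - x i) + (\<Sum>l\<in>{1..m}-{i}. ln (1 - x l))"
    using assms(2) by (simp add: sum.remove)
  moreover have "ln (1 - x i) \<le> 0" using assms unfolding indom_def by auto
  ultimately show ?thesis unfolding Ti_def m0_tilde_def by linarith
qed

lemma G_nonneg: "0 \<le> G m q i x"
  unfolding G_def by auto

lemma bh_R_mem:
  assumes "0 < bh_R x m q"
  shows "bh_R x m q \<in> {1..m}" "pord x m (bh_R x m q) \<le> real (bh_R x m q) * q / m0_tilde x m"
proof -
  let ?S = "{0} \<union> {i \<in> {1..m}. pord x m i \<le> real i * q / m0_tilde x m}"
  have "finite ?S" by auto
  then have "bh_R x m q \<in> ?S" unfolding bh_R_def by (intro Max_in) auto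
  then show "bh_R x m q \<in> {1..m}" "pord x m (bh_R x m q) \<le> real (bh_R x m q) * q / m0_tilde x m"
    using assms by auto
qed

lemma fdp_le:
  assumes d: "indom m x" and N: "N \<subseteq> {1..m}" and q: "0 < q"
  shows "fdp x m N q \<le> (\<Sum>i\<in>N. G m q i x)"
proof (cases "bh_R x m q = 0")
  case True
  then have "bh_rejected x m q = {}" unfolding bh_rejected_def by auto
  then show ?thesis unfolding fdp_def using sum_nonneg[OF G_nonneg] by simp
next
  case False
  let ?R = "bh_R x m q"
  have R: "?R \<in> {1..m}" "pord x m ?R \<le> real ?R * q / m0_tilde x m"
    using bh_R_mem False by auto
  have fin: "finite N" using N finite_subset by blast
  have sub: "bh_rejected x m q \<inter> N \<subseteq> {i\<in>N. x i \<le> real ?R * q / Ti x m i}"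
  proof
    fix i assume i: "i \<in> bh_rejected x m q \<inter> N"
    then have "x i \<le> pord x m ?R" unfolding bh_rejected_def by auto
    also have "\<dots> \<le> real ?R * q / m0_tilde x m" by (rule R(2))
    also have "\<dots> \<le> real ?R * q / Ti x m i"
      using Ti_ge2[OF d, of i] Ti_le_m0[OF d, of i] i N q
      by (intro divide_left_mono) auto
    finally show "i \<in> {i\<in>N. x i \<le> real ?R * q / Ti x m i}" using i by auto
  qed
  have "fdp x m N q = real (card (bh_rejected x m q \<inter> N)) / real ?R"
    unfolding fdp_def using R by auto
  also have "\<dots> \<le> real (card {i\<in>N. x i \<le> real ?R * q / Ti x m i}) / real ?R"
    using sub fin R by (intro divide_right_mono) (auto intro: card_mono)
  also have "\<dots> = (\<Sum>i\<in>{i\<in>N. x i \<le> real ?R * q / Ti x m i}. 1 / real ?R)"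
    by simp
  also have "\<dots> = (\<Sum>i\<in>N. G m q i x)"
    unfolding G_def using d R fin by (simp add: sum.inter_filter[symmetric])
  finally show ?thesis .
qed

lemma bh_R_mono:
  assumes d: "indom m x" and i: "i \<in> {1..m}" and v: "x i \<le> v" "v < 1" and q: "0 < q"
  shows "bh_R (x(i:=v)) m q \<le> bh_R x m q"
proof -
  let ?x = "x(i:=v)"
  have "0 \<le> x i" using d i unfolding indom_def by auto
  then have d': "indom m ?x" using d v unfolding indom_def by auto
  have "m0_tilde x m \<le> m0_tilde ?x m"
    unfolding m0_tilde_def
  proof -
    have "(\<Sum>l\<in>{1..m}. ln (1 - ?x l)) \<le> (\<Sum>l\<in>{1..m}. ln (1 - x l))"
    proof (rule sum_mono)
      fix l assume "l \<in> {1..m}"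
      then show "ln (1 - ?x l) \<le> ln (1 - x l)" using v by auto
    qed
    then show "2 - (\<Sum>l = 1..m. ln (1 - x l)) \<le> 2 - (\<Sum>l = 1..m. ln (1 - ?x l))" by linarith
  qed
  note m0 = this m0_ge2[OF d]
  have "{k\<in>{1..m}. k \<le> cnt ?x m (real k * q / m0_tilde ?x m)}
      \<subseteq> {k\<in>{1..m}. k \<le> cnt x m (real k * q / m0_tilde x m)}"
  proof safe
    fix k assume k: "k \<in> {1..m}" "k \<le> cnt ?x m (real k * q / m0_tilde ?x m)"
    have th: "real k * q / m0_tilde ?x m \<le> real k * q / m0_tilde x m"
      using m0 q by (intro divide_left_mono) auto
    have "{l \<in> {1..m}. ?x l \<le> real k * q / m0_tilde ?x m} \<subseteq> {l \<in> {1..m}. x l \<le> real k * q / m0_tilde x m}"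
      using th v by (auto split: if_splits)
    then have "cnt ?x m (real k * q / m0_tilde ?x m) \<le> cnt x m (real k * q / m0_tilde x m)"
      unfolding cnt_def by (intro card_mono) auto
    then show "k \<le> cnt x m (real k * q / m0_tilde x m)" using k by linarith
  qed
  then show ?thesis unfolding bh_R_alt
    by (intro Max_mono) auto
qed

lemma Ti_upd: "i \<in> {1..m} \<Longrightarrow> Ti (y(i:=u)) m i = Ti y m i"
  unfolding Ti_def by (intro arg_cong[where f="\<lambda>s. 2 - s"] sum.cong) auto

lemma inner_bound:
  assumes i: "i \<in> {1..m}" and q: "0 < q"
  shows "(\<integral>\<^sup>+u. ennreal (G m q i (y(i:=u))) \<partial>uniform_measure lborel {0..1}) \<le> ennreal (q / Ti y m i)"
proof -
  let ?U = "uniform_measure lborel {0..1::real}"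
  let ?R = "\<lambda>u. bh_R (y(i:=u)) m q"
  let ?f = "\<lambda>u. G m q i (y(i:=u))"
  define c where "c = q / Ti y m i"
  define S where "S = {u. indom m (y(i:=u)) \<and> u \<le> c * real (?R u)}"
  have f_eq: "?f u = (if u \<in> S then 1 / real (max (?R u) 1) else 0)" for u
    unfolding G_def S_def c_def using Ti_upd[OF i] i by (auto simp: field_simps)
  have f0: "?f u = 0" if "u \<notin> S" for u using f_eq that by auto
  show ?thesis
  proof (cases "S = {}")
    case True
    then show ?thesis using f0 by simp
  next
    case False
    have Sd: "0 \<le> u \<and> u < 1" if "u \<in> S" for u
    proof -
      have "indom m (y(i:=u))" using that unfolding S_def by auto
      then show ?thesis using i unfolding indom_def by (metis fun_upd_same)
    qed
    have bdd: "bdd_above S" using Sd by (intro bdd_aboveI[of _ 1]) force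
    define s where "s = Sup S"
    have s1: "s \<le> 1" unfolding s_def using False Sd by (intro cSup_least) force+
    have us: "u \<le> s" if "u \<in> S" for u unfolding s_def using bdd that by (simp add: cSup_upper)
    have s0: "0 \<le> s" using False Sd us by force
    have key: "s \<le> c * real (?R u)" if u: "u \<in> S" for u
      unfolding s_def
    proof (rule cSup_least[OF False])
      fix v assume v: "v \<in> S"
      show "v \<le> c * real (?R u)"
      proof (cases "u \<le> v")
        case True
        have du: "indom m (y(i:=u))" using u unfolding S_def by auto
        have "?R v \<le> ?R u"
          using bh_R_mono[OF du i _ _ q, of v] True Sd[OF v] by simp
        moreover have "0 \<le> c" unfolding c_def using q Ti_ge2[OF du, of i] Ti_upd[OF i, where u=u and y=y] by simp
        ultimately have "c * real (?R v) \<le> c * real (?R u)" by (intro mult_left_mono) auto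
        then show ?thesis using v unfolding S_def by auto
      next
        case False
        then show ?thesis using u unfolding S_def by auto
      qed
    qed
    have cpos: "0 < c"
    proof -
      obtain u where "u \<in> S" using False by auto
      then have "indom m (y(i:=u))" unfolding S_def by auto
      then have "2 \<le> Ti y m i" using Ti_ge2 Ti_upd[OF i, where u=u and y=y] by metis
      then show ?thesis unfolding c_def using q by simp
    qed
    show ?thesis
    proof (cases "s = 0")
      case True
      have "?f u \<le> indicator {0} u" for u
      proof (cases "u \<in> S")
        case True
        then have "u = 0" using us Sd \<open>s = 0\<close> by force
        then show ?thesis using True f_eq[of u] by simp
      qed (simp add: f0)
      then have h: "ennreal (?f u) \<le> indicator {0} u" for u
      proof -
        have a: "?f u \<le> indicator {0} u" using \<open>\<And>u. ?f u \<le> indicator {0} u\<close> .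
        show ?thesis
        proof (cases "u = 0")
          case True
          then show ?thesis using a by (simp add: indicator_def)
        next
          case False
          then have "?f u = 0" using a G_nonneg[of m q i "y(i:=u)"] by (simp add: indicator_def)
          then show ?thesis by simp
        qed
      qed
      then have "(\<integral>\<^sup>+u. ennreal (?f u) \<partial>?U) \<le> (\<integral>\<^sup>+u. indicator {0} u \<partial>?U)"
        by (intro nn_integral_mono) auto
      also have "\<dots> = emeasure ?U {0}" by simp
      also have "\<dots> = 0" by (simp add: emeasure_uniform_measure)
      finally show ?thesis by simp
    next
      case False
      then have spos: "0 < s" using s0 by simp
      have "?f u \<le> (c / s) * indicator {0..s} u" for u
      proof (cases "u \<in> S")
        case True
        have "s \<le> c * real (?R u)" using key True .
        then have Rpos: "s / c \<le> real (?R u)" using cpos by (simp add: field_simps)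
        then have Rp: "0 < real (?R u)" using spos cpos by (smt (verit) divide_pos_pos)
        then have "?f u = 1 / real (?R u)" using f_eq[of u] True by simp
        also have "\<dots> \<le> 1 / (s / c)" using Rpos spos cpos Rp by (intro divide_left_mono) auto
        also have "\<dots> = c / s" by simp
        finally show ?thesis using True us Sd by simp
      next
        case False
        then show ?thesis using f0 cpos s0 by simp
      qed
      then have h: "ennreal (?f u) \<le> ennreal (c / s) * indicator {0..s} u" for u
      proof -
        have a: "?f u \<le> (c / s) * indicator {0..s} u" using \<open>\<And>u. ?f u \<le> (c / s) * indicator {0..s} u\<close> .
        show ?thesis
        proof (cases "u \<in> {0..s}")
          case True
          then show ?thesis using a by (simp add: ennreal_leI)
        next
          case False
          then have "?f u = 0" using a G_nonneg[of m q i "y(i:=u)"] by simp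
          then show ?thesis by simp
        qed
      qed
      then have "(\<integral>\<^sup>+u. ennreal (?f u) \<partial>?U) \<le> (\<integral>\<^sup>+u. ennreal (c / s) * indicator {0..s} u \<partial>?U)"
        by (intro nn_integral_mono) auto
      also have "\<dots> = ennreal (c / s) * emeasure ?U {0..s}"
        by (subst nn_integral_cmult_indicator) auto
      also have "emeasure ?U {0..s} = ennreal s"
        using s0 s1 by (simp add: emeasure_uniform_measure Int_absorb2 divide_ennreal_def)
      also have "ennreal (c / s) * ennreal s = ennreal c"
        using spos cpos by (simp add: ennreal_mult[symmetric])
      finally show ?thesis unfolding c_def .
    qed
  qed
qed

definition L :: "real \<Rightarrow> real" where "L u = max 0 (- ln (1 - u))"

lemma L_nonneg: "0 \<le> L u" unfolding L_def by simp

lemma L_meas[measurable]: "L \<in> borel_measurable borel"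
  unfolding L_def by measurable

lemma recip_laplace:
  assumes a: "0 < a"
  shows "(\<integral>\<^sup>+t. ennreal (exp (- (t * a))) * indicator {0..} t \<partial>lborel) = ennreal (1 / a)"
proof -
  have "(\<integral>\<^sup>+t. ennreal (exp (- (t * a))) * indicator {0..} t \<partial>lborel) = ennreal (0 - (- exp (- (0 * a)) / a))"
  proof (rule nn_integral_FTC_atLeast)
    show "(\<lambda>t. exp (- (t * a))) \<in> borel_measurable borel" by measurable
    show "DERIV (\<lambda>t. - exp (- (t * a)) / a) x :> exp (- (x * a))" for x
      using a by (auto intro!: derivative_eq_intros simp: field_simps)
    show "0 \<le> exp (- (x * a))" for x by simp
    show "((\<lambda>t. - exp (- (t * a)) / a) \<longlongrightarrow> 0) at_top" using a by real_asymp
  qed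
  then show ?thesis by simp
qed

lemma tail_int:
  "(\<integral>\<^sup>+t. ennreal ((1 + t) powr (- (real k + 2))) * indicator {0..} t \<partial>lborel) = ennreal (1 / (real k + 1))"
proof -
  have "(\<integral>\<^sup>+t. ennreal ((1 + t) powr (- (real k + 2))) * indicator {0..} t \<partial>lborel)
      = ennreal (0 - (- ((1 + 0) powr (- (real k + 1))) / (real k + 1)))"
  proof (rule nn_integral_FTC_atLeast)
    show "(\<lambda>t::real. (1 + t) powr (- (real k + 2))) \<in> borel_measurable borel" by measurable
    show "DERIV (\<lambda>t. - ((1 + t) powr (- (real k + 1))) / (real k + 1)) x :> (1 + x) powr (- (real k + 2))"
      if "0 \<le> x" for x
    proof -
      have d1: "DERIV (\<lambda>t. (1 + t) powr (- (real k + 1))) x :> (- (real k + 1)) * (1 + x) powr (- (real k + 1) - 1) * 1"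
        using that by (intro DERIV_chain2[OF has_real_derivative_powr]) (auto intro!: derivative_eq_intros)
      have "DERIV (\<lambda>t. - ((1 + t) powr (- (real k + 1))) / (real k + 1)) x :>
           - ((- (real k + 1)) * (1 + x) powr (- (real k + 1) - 1) * 1) / (real k + 1)"
        using DERIV_cdivide[OF DERIV_minus[OF d1], of "real k + 1"] by simp
      moreover have "- ((- (real k + 1)) * (1 + x) powr (- (real k + 1) - 1) * 1) / (real k + 1)
          = (1 + x) powr (- (real k + 2))"
        by (simp add: field_simps)
      ultimately show ?thesis by simp
    qed
    show "0 \<le> (1 + x) powr (- (real k + 2))" if "0 \<le> x" for x :: real by simp
    show "((\<lambda>t::real. - ((1 + t) powr (- (real k + 1))) / (real k + 1)) \<longlongrightarrow> 0) at_top" by real_asymp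
  qed
  then show ?thesis by simp
qed

lemma unif_laplace:
  assumes t: "0 \<le> t"
  shows "(\<integral>\<^sup>+u. ennreal (exp (- (t * L u))) \<partial>uniform_measure lborel {0..1}) = ennreal (1 / (1 + t))"
proof -
  let ?F = "\<lambda>u::real. - ((1 - u) powr (t + 1)) / (t + 1)"
  have hi: "((\<lambda>u. exp (- (t * L u))) has_integral (?F 1 - ?F 0)) {0..1}"
  proof (rule fundamental_theorem_of_calculus_interior)
    show "continuous_on {0..1} ?F" using t
      by (intro continuous_intros continuous_on_powr') auto
    fix x :: real assume x: "x \<in> {0<..<1}"
    have d1: "DERIV (\<lambda>u. (1 - u) powr (t + 1)) x :> (t + 1) * (1 - x) powr (t + 1 - 1) * (-1)"
      using x by (intro DERIV_chain2[OF has_real_derivative_powr]) (auto intro!: derivative_eq_intros)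
    have "DERIV ?F x :> - ((t + 1) * (1 - x) powr (t + 1 - 1) * (-1)) / (t + 1)"
      using DERIV_cdivide[OF DERIV_minus[OF d1], of "t + 1"] by simp
    moreover have "- ((t + 1) * (1 - x) powr (t + 1 - 1) * (-1)) / (t + 1) = (1 - x) powr t"
      using t by simp
    ultimately have "(?F has_real_derivative (1 - x) powr t) (at x)" by simp
    moreover have "exp (- (t * L x)) = (1 - x) powr t"
      using x unfolding L_def by (simp add: powr_def)
    ultimately show "(?F has_vector_derivative exp (- (t * L x))) (at x)"
      by (simp add: has_real_derivative_iff_has_vector_derivative)
  qed auto
  have "?F 1 - ?F 0 = 1 / (1 + t)" using t by simp
  then have hi': "((\<lambda>u. exp (- (t * L u))) has_integral 1 / (1 + t)) {0..1}" using hi by (simp add: add.commute)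
  have "(\<integral>\<^sup>+u. ennreal (exp (- (t * L u))) \<partial>uniform_measure lborel {0..1})
     = (\<integral>\<^sup>+u. ennreal (exp (- (t * L u))) * indicator {0..1} u \<partial>lborel) / emeasure lborel {0..1::real}"
    by (rule nn_integral_uniform_measure) auto
  also have "(\<integral>\<^sup>+u. ennreal (exp (- (t * L u))) * indicator {0..1} u \<partial>lborel)
      = (\<integral>\<^sup>+u. ennreal (indicator {0..1} u * exp (- (t * L u))) \<partial>lborel)"
    by (intro nn_integral_cong) (simp add: indicator_def)
  also have "\<dots> = ennreal (1 / (1 + t))"
    by (rule nn_integral_has_integral_lebesgue[OF _ hi']) simp
  finally show ?thesis by (simp add: divide_ennreal_def)
qed

lemma outer_bound:
  fixes \<mu> :: "nat \<Rightarrow> real measure"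
  assumes J: "finite J" "K \<subseteq> J" and Pr: "\<And>j. prob_space (\<mu> j)"
    and U: "\<And>j. j \<in> K \<Longrightarrow> \<mu> j = uniform_measure lborel {0..1}"
  shows "(\<integral>\<^sup>+y. ennreal (1 / (2 + (\<Sum>j\<in>K. L (y j)))) \<partial>PiM J \<mu>) \<le> ennreal (1 / (real (card K) + 1))"
proof -
  interpret product_prob_space \<mu> J by (simp add: product_prob_space_def product_prob_space_axioms_def
      product_sigma_finite_def Pr prob_space_imp_sigma_finite)
  have PJ: "prob_space (PiM J \<mu>)" using Pr by (rule prob_space_PiM)
  interpret pair_sigma_finite lborel "PiM J \<mu>"
    by (intro pair_sigma_finite.intro lborel.sigma_finite_measure_axioms prob_space_imp_sigma_finite PJ)
  have finK: "finite K" using J finite_subset by blast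
  have compK[measurable]: "(\<lambda>y. y j) \<in> borel_measurable (PiM J \<mu>)" if "j \<in> K" for j
  proof -
    have jJ: "j \<in> J" using that J by blast
    have m: "(\<lambda>y. y j) \<in> measurable (PiM J \<mu>) (\<mu> j)" using jJ by (rule measurable_component_singleton)
    have s: "sets (\<mu> j) = sets borel" by (simp add: U[OF that])
    show ?thesis using m unfolding measurable_cong_sets[OF refl s] .
  qed
  let ?S = "\<lambda>y. \<Sum>j\<in>K. L (y j)"
  have S0: "0 \<le> ?S y" for y by (intro sum_nonneg L_nonneg)
  let ?f = "\<lambda>t y. ennreal (exp (- (t * (2 + ?S y)))) * indicator {0..} t"
  have fmeas: "case_prod ?f \<in> borel_measurable (lborel \<Otimes>\<^sub>M PiM J \<mu>)"
    by measurable
  have "(\<integral>\<^sup>+y. ennreal (1 / (2 + ?S y)) \<partial>PiM J \<mu>) = (\<integral>\<^sup>+y. (\<integral>\<^sup>+t. ?f t y \<partial>lborel) \<partial>PiM J \<mu>)"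
    using S0 by (intro nn_integral_cong) (simp add: recip_laplace add_pos_nonneg)
  also have "\<dots> = (\<integral>\<^sup>+t. (\<integral>\<^sup>+y. ?f t y \<partial>PiM J \<mu>) \<partial>lborel)"
    by (rule Fubini'[OF fmeas])
  also have "\<dots> = (\<integral>\<^sup>+t. ennreal (exp (- (2 * t)) * (1 / (1 + t)) ^ card K) * indicator {0..} t \<partial>lborel)"
  proof (rule nn_integral_cong)
    fix t :: real
    show "(\<integral>\<^sup>+y. ?f t y \<partial>PiM J \<mu>) = ennreal (exp (- (2 * t)) * (1 / (1 + t)) ^ card K) * indicator {0..} t"
    proof (cases "0 \<le> t")
      case False then show ?thesis by simp
    next
      case True
      let ?h = "\<lambda>j u. if j \<in> K then ennreal (exp (- (t * L u))) else 1"
      have fy: "?f t y = ennreal (exp (- (2 * t))) * (\<Prod>j\<in>J. ?h j (y j))" for y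
      proof -
        have "exp (- (t * (2 + ?S y))) = exp (- (2 * t)) * (\<Prod>j\<in>K. exp (- (t * L (y j))))"
        proof -
          have "- (t * (2 + ?S y)) = - (2 * t) + (\<Sum>j\<in>K. - (t * L (y j)))"
            by (simp add: algebra_simps sum_distrib_left sum_negf)
          then show ?thesis by (simp only: exp_add exp_sum[OF finK])
        qed
        moreover have "(\<Prod>j\<in>J. ?h j (y j)) = (\<Prod>j\<in>K. ennreal (exp (- (t * L (y j)))))"
          using J by (simp add: prod.If_cases Int_absorb1)
        ultimately show ?thesis using True
          by (simp only:) (subst ennreal_mult, auto intro: prod_nonneg simp: prod_ennreal)
      qed
      have hm: "?h j \<in> borel_measurable (\<mu> j)" if "j \<in> J" for j
      proof (cases "j \<in> K")
        case True
        then have s: "sets (\<mu> j) = sets borel" using U by simp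
        have "(\<lambda>u. ennreal (exp (- (t * L u)))) \<in> borel_measurable borel" by measurable
        then show ?thesis using True unfolding measurable_cong_sets[OF s refl] by simp
      qed simp
      have hm2: "(\<lambda>y. \<Prod>j\<in>J. ?h j (y j)) \<in> borel_measurable (PiM J \<mu>)"
      proof (rule borel_measurable_prod_ennreal)
        fix j assume jJ: "j \<in> J"
        show "(\<lambda>y. ?h j (y j)) \<in> borel_measurable (PiM J \<mu>)"
          using measurable_compose[of "\<lambda>y. y j" _ _ "?h j", OF measurable_component_singleton[OF jJ, where M=\<mu>] hm[OF jJ]] by simp
      qed
      have hi: "integral\<^sup>N (\<mu> j) (?h j) = (if j \<in> K then ennreal (1 / (1 + t)) else 1)" for j
      proof (cases "j \<in> K")
        case True then show ?thesis using U unif_laplace[OF \<open>0 \<le> t\<close>] by simp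
      next
        case False
        show ?thesis using False prob_space.emeasure_space_1[OF Pr[of j]] by simp
      qed
      have "(\<integral>\<^sup>+y. ?f t y \<partial>PiM J \<mu>) = ennreal (exp (- (2 * t))) * (\<integral>\<^sup>+y. (\<Prod>j\<in>J. ?h j (y j)) \<partial>PiM J \<mu>)"
        unfolding fy by (rule nn_integral_cmult[OF hm2])
      also have "(\<integral>\<^sup>+y. (\<Prod>j\<in>J. ?h j (y j)) \<partial>PiM J \<mu>) = (\<Prod>j\<in>J. integral\<^sup>N (\<mu> j) (?h j))"
        by (rule product_nn_integral_prod[OF J(1) hm])
      also have "\<dots> = (\<Prod>j\<in>J. if j \<in> K then ennreal (1 / (1 + t)) else 1)" unfolding hi ..
      also have "\<dots> = ennreal (1 / (1 + t)) ^ card K"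
        using J by (simp add: prod.If_cases Int_absorb1)
      finally show ?thesis using True
        by (simp add: ennreal_mult ennreal_power)
    qed
  qed
  also have "\<dots> \<le> (\<integral>\<^sup>+t. ennreal ((1 + t) powr (- (real (card K) + 2))) * indicator {0..} t \<partial>lborel)"
  proof (intro nn_integral_mono)
    fix t :: real
    show "ennreal (exp (- (2 * t)) * (1 / (1 + t)) ^ card K) * indicator {0..} t
        \<le> ennreal ((1 + t) powr (- (real (card K) + 2))) * indicator {0..} t"
    proof (cases "0 \<le> t")
      case True
      have a: "1 + t \<le> exp t" by (rule exp_ge_add_one_self)
      have "(1 + t) ^ 2 \<le> exp t ^ 2" using a True by (intro power_mono) auto
      also have "exp t ^ 2 = exp (2 * t)" by (simp add: exp_double[symmetric] mult.commute)
      finally have b: "(1 + t) ^ 2 \<le> exp (2 * t)" .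
      have "exp (- (2 * t)) \<le> 1 / (1 + t) ^ 2"
        using b True by (simp add: exp_minus field_simps)
      then have "exp (- (2 * t)) * (1 / (1 + t)) ^ card K \<le> 1 / (1 + t) ^ 2 * (1 / (1 + t)) ^ card K"
        using True by (intro mult_right_mono) auto
      also have "\<dots> = (1 + t) powr (- (real (card K) + 2))"
      proof -
        have e: "real (card K) + 2 = real (card K + 2)" by simp
        have "(1 + t) powr (- (real (card K) + 2)) = 1 / (1 + t) ^ (card K + 2)"
        proof -
          have p1: "(1 + t) powr (real (card K + 2)) = (1 + t) ^ (card K + 2)"
            by (rule powr_realpow) (use True in simp)
          have "(1 + t) powr (- (real (card K) + 2)) = 1 / (1 + t) powr (real (card K) + 2)"
            by (rule powr_minus_divide)
          then show ?thesis unfolding e p1 .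
        qed
        then show ?thesis by (simp add: power_add power_divide power2_eq_square)
      qed
      finally show ?thesis by (intro mult_right_mono ennreal_leI) auto
    qed simp
  qed
  also have "\<dots> = ennreal (1 / (real (card K) + 1))" by (rule tail_int)
  finally show ?thesis .
qed

definition cntR :: "(nat \<Rightarrow> real) \<Rightarrow> nat \<Rightarrow> real \<Rightarrow> real" where
  "cntR x m t = (\<Sum>l\<in>{1..m}. if x l \<le> t then 1 else 0)"

lemma cnt_cntR: "real (cnt x m t) = cntR x m t"
  unfolding cnt_def cntR_def by (simp add: sum.If_cases Int_def)

lemma bh_R_alt2:
  "bh_R x m q = Max {k. k = 0 \<or> (1 \<le> k \<and> k \<le> m \<and> real k \<le> cntR x m (real k * q / m0_tilde x m))}"
  unfolding bh_R_alt cnt_cntR[symmetric] by (intro arg_cong[where f=Max]) auto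

lemma comp_meas:
  "l \<in> {1..m} \<Longrightarrow> (\<lambda>x. x l) \<in> borel_measurable (PiM {1..m} (\<lambda>_. borel))"
  by (rule measurable_component_singleton)

lemma m0_meas[measurable]: "(\<lambda>x. m0_tilde x m) \<in> borel_measurable (PiM {1..m} (\<lambda>_. borel))"
  unfolding m0_tilde_def by measurable

lemma cntR_meas[measurable]:
  assumes [measurable]: "f \<in> borel_measurable (PiM {1..m} (\<lambda>_. borel))"
  shows "(\<lambda>x. cntR x m (f x)) \<in> borel_measurable (PiM {1..m} (\<lambda>_. borel))"
  unfolding cntR_def by measurable

lemma bh_R_meas[measurable]: "(\<lambda>x. bh_R x m q) \<in> measurable (PiM {1..m} (\<lambda>_. borel)) (count_space UNIV)"
  unfolding bh_R_alt2 by measurable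

lemma bh_R_meas'[measurable]: "(\<lambda>x. real (bh_R x m q)) \<in> borel_measurable (PiM {1..m} (\<lambda>_. borel))"
  using measurable_compose[OF bh_R_meas, of real borel] by simp

lemma Ti_meas[measurable]: "(\<lambda>x. Ti x m i) \<in> borel_measurable (PiM {1..m} (\<lambda>_. borel))"
  unfolding Ti_def by measurable

lemma indom_meas[measurable]: "Measurable.pred (PiM {1..m} (\<lambda>_. borel)) (indom m)"
  unfolding indom_def by measurable

lemma G_meas[measurable]: assumes i: "i \<in> {1..m}"
  shows "(\<lambda>x. G m q i x) \<in> borel_measurable (PiM {1..m} (\<lambda>_. borel))"
proof -
  let ?P = "PiM {1..m} (\<lambda>_. borel)"
  have a: "(\<lambda>x. real (bh_R x m q)) \<in> borel_measurable ?P" by (rule bh_R_meas')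
  have b: "(\<lambda>x. x i) \<in> borel_measurable ?P" by (rule comp_meas[OF i])
  have c: "(\<lambda>x. real (bh_R x m q) * q / Ti x m i) \<in> borel_measurable ?P"
    using a Ti_meas by (intro borel_measurable_divide borel_measurable_times) auto
  have d: "Measurable.pred ?P (\<lambda>x. indom m x \<and> x i \<le> real (bh_R x m q) * q / Ti x m i)"
  proof -
    have "{x \<in> space ?P. x i \<le> real (bh_R x m q) * q / Ti x m i} \<in> sets ?P"
      by (rule borel_measurable_le[OF b c])
    then have "Measurable.pred ?P (\<lambda>x. x i \<le> real (bh_R x m q) * q / Ti x m i)"
      by (simp add: pred_def)
    then show ?thesis using indom_meas by (intro pred_intros_logic) auto
  qed
  have e: "(\<lambda>x. 1 / max (real (bh_R x m q)) 1) \<in> borel_measurable ?P"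
    using a by (intro borel_measurable_divide borel_measurable_max) auto
  show ?thesis unfolding G_def of_nat_max
    using d e by (intro measurable_If) auto
qed

lemma pord_cong: "(\<And>l. l \<in> {1..m} \<Longrightarrow> x l = x' l) \<Longrightarrow> pord x m k = pord x' m k"
  unfolding pord_def by (rule arg_cong[where f="\<lambda>xs. sort xs ! (k - 1)"]) (rule map_cong, auto)

lemma m0_cong: "(\<And>l. l \<in> {1..m} \<Longrightarrow> x l = x' l) \<Longrightarrow> m0_tilde x m = m0_tilde x' m"
  unfolding m0_tilde_def by simp

lemma bh_R_cong: "(\<And>l. l \<in> {1..m} \<Longrightarrow> x l = x' l) \<Longrightarrow> bh_R x m q = bh_R x' m q"
  unfolding bh_R_def using pord_cong[of m x x'] m0_cong[of m x x'] by simp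

lemma Ti_cong: "(\<And>l. l \<in> {1..m} \<Longrightarrow> x l = x' l) \<Longrightarrow> Ti x m i = Ti x' m i"
  unfolding Ti_def by simp

lemma indom_cong: "(\<And>l. l \<in> {1..m} \<Longrightarrow> x l = x' l) \<Longrightarrow> indom m x = indom m x'"
  unfolding indom_def by simp

lemma G_cong: "i \<in> {1..m} \<Longrightarrow> (\<And>l. l \<in> {1..m} \<Longrightarrow> x l = x' l) \<Longrightarrow> G m q i x = G m q i x'"
  unfolding G_def using bh_R_cong[of m x x' q] Ti_cong[of m x x' i] indom_cong[of m x x'] by simp

lemma indom_upd: "indom m (y(i:=u)) \<Longrightarrow> 0 \<le> v \<Longrightarrow> v < 1 \<Longrightarrow> indom m (y(i:=v))"
  unfolding indom_def by auto

lemma per_i: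
  fixes \<mu> :: "nat \<Rightarrow> real measure"
  assumes N: "N \<subseteq> {1..m}" and i: "i \<in> N" and q: "0 < q"
    and Pr: "\<And>l. prob_space (\<mu> l)" and S: "\<And>l. sets (\<mu> l) = sets borel"
    and U: "\<And>l. l \<in> N \<Longrightarrow> \<mu> l = uniform_measure lborel {0..1}"
  shows "(\<integral>\<^sup>+x. ennreal (G m q i x) \<partial>PiM {1..m} \<mu>) \<le> ennreal (q / real (card N))"
proof -
  interpret product_sigma_finite \<mu>
    by (simp add: product_sigma_finite_def Pr prob_space_imp_sigma_finite)
  define I where "I = {1..m::nat}"
  define J where "J = I - {i}"
  define K where "K = N - {i}"
  have iI: "i \<in> I" using N i unfolding I_def by auto
  have finJ: "finite J" unfolding J_def I_def by simp
  have KJ: "K \<subseteq> J" using N unfolding K_def J_def I_def by auto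
  have finN: "finite N" using N finite_subset by blast
  have IJ: "insert i J = I" using iI unfolding J_def by auto
  have iJ: "i \<notin> J" unfolding J_def by simp
  have setsI: "sets (PiM I \<mu>) = sets (PiM I (\<lambda>_. borel))" by (rule sets_PiM_cong) (auto simp: S)
  have GM: "(\<lambda>x. ennreal (G m q i x)) \<in> borel_measurable (PiM (insert i J) \<mu>)"
  proof -
    have g[measurable]: "(\<lambda>x. G m q i x) \<in> borel_measurable (PiM I (\<lambda>_. borel))"
      using G_meas iI unfolding I_def by blast
    show ?thesis unfolding IJ measurable_cong_sets[OF setsI refl] by measurable
  qed
  have compK[measurable]: "(\<lambda>y. y j) \<in> borel_measurable (PiM J \<mu>)" if "j \<in> K" for j
  proof -
    have jJ: "j \<in> J" using that KJ by blast
    have m: "(\<lambda>y. y j) \<in> measurable (PiM J \<mu>) (\<mu> j)" using jJ by (rule measurable_component_singleton)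
    show ?thesis using m unfolding measurable_cong_sets[OF refl S] .
  qed
  let ?S = "\<lambda>y. \<Sum>j\<in>K. L (y j)"
  have S0: "0 \<le> ?S y" for y by (intro sum_nonneg L_nonneg)
  have HM: "(\<lambda>y. ennreal (1 / (2 + ?S y))) \<in> borel_measurable (PiM J \<mu>)" by measurable
  have "(\<integral>\<^sup>+x. ennreal (G m q i x) \<partial>PiM {1..m} \<mu>) = (\<integral>\<^sup>+x. ennreal (G m q i x) \<partial>PiM (insert i J) \<mu>)"
    unfolding IJ I_def ..
  also have "\<dots> = (\<integral>\<^sup>+y. (\<integral>\<^sup>+u. ennreal (G m q i (y(i:=u))) \<partial>\<mu> i) \<partial>PiM J \<mu>)"
    by (rule product_nn_integral_insert[OF finJ iJ GM])
  also have "\<dots> \<le> (\<integral>\<^sup>+y. ennreal q * ennreal (1 / (2 + ?S y)) \<partial>PiM J \<mu>)"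
  proof (rule nn_integral_mono)
    fix y :: "nat \<Rightarrow> real"
    show "(\<integral>\<^sup>+u. ennreal (G m q i (y(i:=u))) \<partial>\<mu> i) \<le> ennreal q * ennreal (1 / (2 + ?S y))"
    proof (cases "indom m (y(i:=0))")
      case True
      have "Ti y m i = 2 + (\<Sum>l\<in>J. L (y l))"
      proof -
        have "(\<Sum>l\<in>J. ln (1 - y l)) = (\<Sum>l\<in>J. - L (y l))"
        proof (rule sum.cong)
          fix l assume l: "l \<in> J"
          then have "0 \<le> y l \<and> y l < 1" using True unfolding indom_def J_def I_def
            by (metis DiffE fun_upd_other singletonI)
          then show "ln (1 - y l) = - L (y l)" unfolding L_def by simp
        qed simp
        then show ?thesis unfolding Ti_def J_def I_def by (simp add: sum_negf)
      qed
      moreover have "?S y \<le> (\<Sum>l\<in>J. L (y l))" using KJ finJ by (intro sum_mono2) (auto simp: L_nonneg)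
      ultimately have le: "q / Ti y m i \<le> q / (2 + ?S y)"
        using q S0[of y] by (intro divide_left_mono) auto
      have "(\<integral>\<^sup>+u. ennreal (G m q i (y(i:=u))) \<partial>\<mu> i) \<le> ennreal (q / Ti y m i)"
        using inner_bound[of i m q y] U[OF i] iI q unfolding I_def by simp
      also have "\<dots> \<le> ennreal (q / (2 + ?S y))" using le by (rule ennreal_leI)
      also have "\<dots> = ennreal q * ennreal (1 / (2 + ?S y))"
        using q S0[of y] by (subst ennreal_mult[symmetric]) auto
      finally show ?thesis .
    next
      case False
      have "G m q i (y(i:=u)) = 0" for u
        using False indom_upd[of m y i u 0] unfolding G_def by auto
      then show ?thesis by simp
    qed
  qed
  also have "\<dots> = ennreal q * (\<integral>\<^sup>+y. ennreal (1 / (2 + ?S y)) \<partial>PiM J \<mu>)"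
    by (rule nn_integral_cmult[OF HM])
  also have "\<dots> \<le> ennreal q * ennreal (1 / (real (card K) + 1))"
    by (intro mult_left_mono outer_bound[OF finJ KJ Pr]) (auto simp: K_def U)
  also have "\<dots> = ennreal (q / real (card N))"
  proof -
    have "card K = card N - 1" unfolding K_def using i finN by simp
    moreover have "card N \<ge> 1" using i finN by (metis card_0_eq empty_iff less_one not_le)
    ultimately have "real (card K) + 1 = real (card N)" by simp
    then show ?thesis using q by (simp add: ennreal_mult[symmetric])
  qed
  finally show ?thesis .
qed

theorem claim1:
  fixes M :: "'a measure" and p :: "nat \<Rightarrow> 'a \<Rightarrow> real"
    and m :: nat and N :: "nat set" and q :: real
  assumes "prob_space M"
    and "m \<ge> 1"
    and "N \<subseteq> {1..m}" and "card N \<ge> 1"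
    and "0 < q" and "q \<le> 1"
    and "\<And>i. i \<in> {1..m} \<Longrightarrow> p i \<in> borel_measurable M"
    and "\<And>i \<omega>. i \<in> {1..m} \<Longrightarrow> \<omega> \<in> space M \<Longrightarrow> p i \<omega> \<in> {0..<1}"
    and "prob_space.indep_vars M (\<lambda>_. borel) p {1..m}"
    and "\<And>i. i \<in> N \<Longrightarrow> distr M borel (p i) = uniform_measure lborel {0..1}"
  shows "(\<integral>\<omega>. fdp (\<lambda>i. p i \<omega>) m N q \<partial>M) \<le> q"
proof -
  interpret PM: prob_space M by (rule assms(1))
  define I where "I = {1..m::nat}"
  have Ine: "I \<noteq> {}" using assms(2) unfolding I_def by auto
  have NI: "N \<subseteq> I" using assms(3) unfolding I_def .
  have finN: "finite N" using NI finite_subset unfolding I_def by blast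
  have pm[measurable]: "p l \<in> borel_measurable M" if "l \<in> I" for l using assms(7) that unfolding I_def by simp
  define p' where "p' l = (if l \<in> I then p l else (\<lambda>_. 0::real))" for l
  have rv: "p' l \<in> measurable M borel" for l unfolding p'_def by (cases "l \<in> I") (auto simp: pm)
  have ind': "PM.indep_vars (\<lambda>_. borel) p' I"
    using assms(9) unfolding I_def[symmetric] by (subst PM.indep_vars_cong[of I I p' p]) (auto simp: p'_def)
  define X where "X \<omega> = (\<lambda>l\<in>I. p l \<omega>)" for \<omega>
  have X'eq: "(\<lambda>\<omega>. \<lambda>l\<in>I. p' l \<omega>) = X" unfolding X_def p'_def by (auto simp: fun_eq_iff)
  define \<mu> where "\<mu> l = (if l \<in> I then distr M borel (p l) else uniform_measure lborel {0..1::real})" for l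
  have distrX: "distr M (PiM I (\<lambda>_. borel)) X = PiM I \<mu>"
  proof -
    have "distr M (PiM I (\<lambda>_. borel)) X = PiM I (\<lambda>l. distr M borel (p' l))"
      using PM.indep_vars_iff_distr_eq_PiM[OF Ine rv] ind' X'eq by simp
    also have "\<dots> = PiM I \<mu>" by (rule PiM_cong) (auto simp: p'_def \<mu>_def)
    finally show ?thesis .
  qed
  have Pr: "prob_space (\<mu> l)" for l
  proof (cases "l \<in> I")
    case True then show ?thesis unfolding \<mu>_def by (simp add: PM.prob_space_distr)
  next
    case False then show ?thesis unfolding \<mu>_def by (simp add: prob_space_uniform_measure)
  qed
  have S: "sets (\<mu> l) = sets borel" for l unfolding \<mu>_def by simp
  have U: "\<mu> l = uniform_measure lborel {0..1}" if "l \<in> N" for l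
    using that NI assms(10) unfolding \<mu>_def by auto
  have Xm[measurable]: "X \<in> measurable M (PiM I (\<lambda>_. borel))" unfolding X_def by measurable
  have Gm[measurable]: "(\<lambda>x. G m q i x) \<in> borel_measurable (PiM I (\<lambda>_. borel))" if "i \<in> N" for i
    using G_meas that NI unfolding I_def by blast
  have indom\<omega>: "indom m (\<lambda>l. p l \<omega>)" if "\<omega> \<in> space M" for \<omega>
    using assms(8) that unfolding indom_def by auto
  have GX: "G m q i (\<lambda>l. p l \<omega>) = G m q i (X \<omega>)" if "i \<in> N" for i \<omega>
    using that NI by (intro G_cong) (auto simp: X_def I_def)
  have "(\<integral>\<^sup>+\<omega>. ennreal (fdp (\<lambda>i. p i \<omega>) m N q) \<partial>M) \<le> (\<integral>\<^sup>+\<omega>. (\<Sum>i\<in>N. ennreal (G m q i (X \<omega>))) \<partial>M)"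
  proof (rule nn_integral_mono)
    fix \<omega> assume \<omega>: "\<omega> \<in> space M"
    have "fdp (\<lambda>i. p i \<omega>) m N q \<le> (\<Sum>i\<in>N. G m q i (\<lambda>l. p l \<omega>))"
      by (rule fdp_le[OF indom\<omega>[OF \<omega>] assms(3) assms(5)])
    also have "\<dots> = (\<Sum>i\<in>N. G m q i (X \<omega>))" using GX by simp
    finally have "ennreal (fdp (\<lambda>i. p i \<omega>) m N q) \<le> ennreal (\<Sum>i\<in>N. G m q i (X \<omega>))" by (rule ennreal_leI)
    also have "\<dots> = (\<Sum>i\<in>N. ennreal (G m q i (X \<omega>)))" by (rule sum_ennreal[symmetric]) (simp add: G_nonneg)
    finally show "ennreal (fdp (\<lambda>i. p i \<omega>) m N q) \<le> (\<Sum>i\<in>N. ennreal (G m q i (X \<omega>)))" .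
  qed
  also have "\<dots> = (\<Sum>i\<in>N. \<integral>\<^sup>+\<omega>. ennreal (G m q i (X \<omega>)) \<partial>M)"
    by (rule nn_integral_sum) (use Gm in measurable)
  also have "\<dots> = (\<Sum>i\<in>N. \<integral>\<^sup>+x. ennreal (G m q i x) \<partial>PiM I \<mu>)"
  proof (rule sum.cong)
    fix i assume i: "i \<in> N"
    have "(\<integral>\<^sup>+x. ennreal (G m q i x) \<partial>PiM I \<mu>) = (\<integral>\<^sup>+x. ennreal (G m q i x) \<partial>distr M (PiM I (\<lambda>_. borel)) X)"
      unfolding distrX ..
    also have "\<dots> = (\<integral>\<^sup>+\<omega>. ennreal (G m q i (X \<omega>)) \<partial>M)"
      by (rule nn_integral_distr[OF Xm]) (use Gm[OF i] in measurable)
    finally show "(\<integral>\<^sup>+\<omega>. ennreal (G m q i (X \<omega>)) \<partial>M) = (\<integral>\<^sup>+x. ennreal (G m q i x) \<partial>PiM I \<mu>)" by simp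
  qed simp
  also have "\<dots> \<le> (\<Sum>i\<in>N. ennreal (q / real (card N)))"
    by (intro sum_mono) (unfold I_def, rule per_i[OF assms(3) _ assms(5) Pr S U])
  also have "\<dots> = ennreal q"
  proof -
    have "(\<Sum>i\<in>N. ennreal (q / real (card N))) = ennreal (real (card N)) * ennreal (q / real (card N))"
      by (simp add: ennreal_of_nat_eq_real_of_nat)
    also have "\<dots> = ennreal (real (card N) * (q / real (card N)))"
      by (rule ennreal_mult[symmetric]) (use assms(5) in auto)
    also have "real (card N) * (q / real (card N)) = q" using assms(4) by simp
    finally show ?thesis .
  qed
  finally have "(\<integral>\<^sup>+\<omega>. ennreal (fdp (\<lambda>i. p i \<omega>) m N q) \<partial>M) \<le> ennreal q" .
  then show ?thesis using assms(5) by (intro integral_real_bounded) auto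
qed

end
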